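(* The $\mathbf{k}$-algebra homomorphism $A:\mathcal{X}\to\mathcal{Q}$ satisfies $A(\mathcal{J})=0$; equivalently, $A\big(x_{i,j}x_{j,k}-x_{i,k}(x_{i,j}+x_{j,k}+\beta)-\alpha\big)=0$ for all $1\le i<j<k\le n$.
   Context: Let $\mathbf{k}$ be a commutative ring, let $\beta,\alpha\in\mathbf{k}$, and let $n$ be a positive integer; write $[m]=\{1,2,\dots,m\}$. Let $\mathcal{X}=\mathbf{k}[x_{i,j}\mid 1\le i<j\le n]$ be the polynomial ring over $\mathbf{k}$ in the indeterminates $x_{i,j}$. Let $\mathcal{J}$ be the ideal of $\mathcal{X}$ generated by all elements $x_{i,j}x_{j,k}-x_{i,k}(x_{i,j}+x_{j,k}+\beta)-\alpha$ for $1\le i<j<k\le n$. Laurent series: for symbols $r_1,\dots,r_n$, a Laurent series over $\mathbf{k}$ is a formal sum $f=\sum_{a\in\mathbb{Z}^n}\lambda_a r_1^{a_1}\cdots r_n^{a_n}$ ($\lambda_a\in\mathbf{k}$) for which there is $d\in\mathbb{Z}$ such that $\lambda_a=0$ whenever some $a_i<d$. Let $\mathcal{Q}$ be the $\mathbf{k}$-algebra of all such Laurent series with the usual multiplication of series (each coefficient of a product is a finite sum); it contains $\mathbf{k}[[r_1,\dots,r_n]]$ and is given the coefficientwise (product) topology with $\mathbf{k}$ discrete. For $i\in[n]$ put $q_i=r_ir_{i+1}\cdots r_n$; the $q_i$ are invertible in $\mathcal{Q}$, every Laurent monomial $r_1^{b_1}\cdots r_n^{b_n}$ is uniquely of the form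 $q_1^{a_1}\cdots q_n^{a_n}$ with $a\in\mathbb{Z}^n$, and for $i<j$ one has $q_i/q_j=r_ir_{i+1}\cdots r_{j-1}$, so $1-q_i/q_j$ is invertible in $\mathbf{k}[[r_1,\dots,r_n]]$. Let $A:\mathcal{X}\to\mathcal{Q}$ be the $\mathbf{k}$-algebra homomorphism with $A(x_{i,j})=-\dfrac{q_i+\beta+\alpha/q_j}{1-q_i/q_j}$ for $1\le i<j\le n$. *)

theory Defs
  imports Main
begin

text \<open>Laurent series in the symbols r_1,...,r_n over a commutative ring.
  An exponent vector is a function nat => int (only coordinates 1..n are used);
  a series is its coefficient function.\<close>

type_synonym 'a lser = "(nat \<Rightarrow> int) \<Rightarrow> 'a"

definition laurent :: "nat \<Rightarrow> 'a::zero lser \<Rightarrow> bool" where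
  "laurent n f \<longleftrightarrow>
     (\<forall>a. f a \<noteq> 0 \<longrightarrow> (\<forall>i. i \<notin> {1..n} \<longrightarrow> a i = 0)) \<and>
     (\<exists>d::int. \<forall>a. (\<exists>i\<in>{1..n}. a i < d) \<longrightarrow> f a = 0)"

definition ls_zero :: "'a::zero lser" where
  "ls_zero = (\<lambda>a. 0)"

definition ls_const :: "'a::zero \<Rightarrow> 'a lser" where
  "ls_const c = (\<lambda>a. if a = (\<lambda>_. 0) then c else 0)"

definition ls_one :: "'a::{zero,one} lser" where
  "ls_one = ls_const 1"

definition ls_add :: "'a::plus lser \<Rightarrow> 'a lser \<Rightarrow> 'a lser" where
  "ls_add f g = (\<lambda>a. f a + g a)"

definition ls_uminus :: "'a::uminus lser \<Rightarrow> 'a lser" where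
  "ls_uminus f = (\<lambda>a. - f a)"

definition ls_sub :: "'a::minus lser \<Rightarrow> 'a lser \<Rightarrow> 'a lser" where
  "ls_sub f g = (\<lambda>a. f a - g a)"

text \<open>Product of series: each coefficient is a finite sum (for Laurent series).\<close>
definition ls_mult :: "'a::comm_ring_1 lser \<Rightarrow> 'a lser \<Rightarrow> 'a lser" where
  "ls_mult f g = (\<lambda>c. \<Sum>a\<in>{a. f a \<noteq> 0 \<and> g (\<lambda>i. c i - a i) \<noteq> 0}. f a * g (\<lambda>i. c i - a i))"

definition ls_inv :: "nat \<Rightarrow> 'a::comm_ring_1 lser \<Rightarrow> 'a lser" where
  "ls_inv n f = (THE g. laurent n g \<and> ls_mult f g = ls_one)"

text \<open>Monomial q_i = r_i r_{i+1} ... r_n.\<close>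
definition ls_q :: "nat \<Rightarrow> nat \<Rightarrow> 'a::{zero,one} lser" where
  "ls_q n i = (\<lambda>a. if a = (\<lambda>k. if i \<le> k \<and> k \<le> n then 1 else 0) then 1 else 0)"

definition A_x :: "nat \<Rightarrow> 'a::comm_ring_1 \<Rightarrow> 'a \<Rightarrow> nat \<Rightarrow> nat \<Rightarrow> 'a lser" where
  "A_x n \<beta> \<alpha> i j =
     ls_uminus
       (ls_mult
          (ls_add (ls_add (ls_q n i) (ls_const \<beta>)) (ls_mult (ls_const \<alpha>) (ls_inv n (ls_q n j))))
          (ls_inv n (ls_sub ls_one (ls_mult (ls_q n i) (ls_inv n (ls_q n j))))))"

end

theory Submission
  imports Defs "HOL-Library.Groups_Big_Fun" "HOL-Library.FuncSet"
begin


definition sok :: "nat \<Rightarrow> int \<Rightarrow> (nat \<Rightarrow> int) \<Rightarrow> bool" where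
  "sok n d a \<longleftrightarrow> (\<forall>i. (i \<in> {1..n} \<longrightarrow> d \<le> a i) \<and> (i \<notin> {1..n} \<longrightarrow> a i = 0))"

definition good :: "'a::zero lser \<Rightarrow> bool" where
  "good f \<longleftrightarrow> (\<exists>n d. d \<le> 0 \<and> (\<forall>a. f a \<noteq> 0 \<longrightarrow> sok n d a))"

lemma sok_mono: "sok n d a \<Longrightarrow> n \<le> n' \<Longrightarrow> d' \<le> d \<Longrightarrow> d' \<le> 0 \<Longrightarrow> sok n' d' a"
  unfolding sok_def by (metis atLeastAtMost_iff order_trans le_trans)

lemma sok_add: "sok n d a \<Longrightarrow> sok n e b \<Longrightarrow> sok n (d+e) (\<lambda>i. a i + b i)"
  unfolding sok_def by (simp add: add_mono)

lemma good_common: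
  assumes "good f" "good g"
  shows "\<exists>n d. d \<le> 0 \<and> (\<forall>a. f a \<noteq> 0 \<longrightarrow> sok n d a) \<and> (\<forall>a. g a \<noteq> 0 \<longrightarrow> sok n d a)"
proof -
  obtain n1 d1 where 1: "d1 \<le> 0" "\<forall>a. f a \<noteq> 0 \<longrightarrow> sok n1 d1 a" using assms(1) good_def by blast
  obtain n2 d2 where 2: "d2 \<le> 0" "\<forall>a. g a \<noteq> 0 \<longrightarrow> sok n2 d2 a" using assms(2) good_def by blast
  show ?thesis
    apply (rule exI[of _ "max n1 n2"], rule exI[of _ "min d1 d2"])
    using 1 2 by (auto intro: sok_mono)
qed

lemma good_common3:
  assumes "good f" "good g" "good h"
  shows "\<exists>n d. d \<le> 0 \<and> (\<forall>a. f a \<noteq> 0 \<longrightarrow> sok n d a) \<and> (\<forall>a. g a \<noteq> 0 \<longrightarrow> sok n d a)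
     \<and> (\<forall>a. h a \<noteq> 0 \<longrightarrow> sok n d a)"
proof -
  obtain n1 d1 where 1: "d1 \<le> 0" "\<forall>a. f a \<noteq> 0 \<longrightarrow> sok n1 d1 a" "\<forall>a. g a \<noteq> 0 \<longrightarrow> sok n1 d1 a"
    using good_common[OF assms(1,2)] by blast
  obtain n2 d2 where 2: "d2 \<le> 0" "\<forall>a. h a \<noteq> 0 \<longrightarrow> sok n2 d2 a" using assms(3) good_def by blast
  show ?thesis
    apply (rule exI[of _ "max n1 n2"], rule exI[of _ "min d1 d2"])
    using 1 2 by (auto intro: sok_mono)
qed

lemma box_finite: "finite {a. sok n d a \<and> sok n d (\<lambda>i. c i - a i)}"
proof -
  let ?E = "\<lambda>p. \<lambda>i::nat. if i \<in> {1..n} then p i else (0::int)"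
  have "{a. sok n d a \<and> sok n d (\<lambda>i. c i - a i)} \<subseteq> ?E ` (PiE {1..n} (\<lambda>i. {d..c i - d}))"
  proof
    fix a assume a: "a \<in> {a. sok n d a \<and> sok n d (\<lambda>i. c i - a i)}"
    have "a = ?E (restrict a {1..n})" using a by (auto simp: sok_def fun_eq_iff restrict_def)
    moreover have "restrict a {1..n} \<in> PiE {1..n} (\<lambda>i. {d..c i - d})"
      using a by (auto simp: sok_def)
    ultimately show "a \<in> ?E ` (PiE {1..n} (\<lambda>i. {d..c i - d}))" by blast
  qed
  moreover have "finite (?E ` (PiE {1..n} (\<lambda>i. {d..c i - d})))"
    by (intro finite_imageI finite_PiE) auto
  ultimately show ?thesis by (rule finite_subset)
qed

lemma supp_finite:
  assumes "\<forall>a. f a \<noteq> 0 \<longrightarrow> sok n d a" "\<forall>a. g a \<noteq> 0 \<longrightarrow> sok n d a"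
  shows "finite {a. f a \<noteq> 0 \<and> g (\<lambda>i. c i - a i) \<noteq> 0}"
  by (rule finite_subset[OF _ box_finite[of n d c]]) (use assms in auto)

lemma supp_finite2:
  fixes f g :: "'a::comm_ring_1 lser"
  assumes "\<forall>a. f a \<noteq> 0 \<longrightarrow> sok n d a" "\<forall>a. g a \<noteq> 0 \<longrightarrow> sok n d a"
  shows "finite {a. f a * g (\<lambda>i. c i - a i) \<noteq> 0}"
  by (rule finite_subset[OF _ supp_finite[OF assms, of c]]) auto

lemma mult_conv:
  fixes f g :: "'a::comm_ring_1 lser"
  assumes "finite {a. f a \<noteq> 0 \<and> g (\<lambda>i. c i - a i) \<noteq> 0}"
  shows "ls_mult f g c = Sum_any (\<lambda>a. f a * g (\<lambda>i. c i - a i))"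
  unfolding ls_mult_def
  by (rule Sum_any.expand_superset[OF assms, symmetric]) auto

lemma mult_conv':
  fixes f g :: "'a::comm_ring_1 lser"
  assumes "\<forall>a. f a \<noteq> 0 \<longrightarrow> sok n d a" "\<forall>a. g a \<noteq> 0 \<longrightarrow> sok n d a"
  shows "ls_mult f g c = Sum_any (\<lambda>a. f a * g (\<lambda>i. c i - a i))"
  by (rule mult_conv[OF supp_finite[OF assms]])

lemma mult_supp:
  fixes f g :: "'a::comm_ring_1 lser"
  assumes "\<forall>a. f a \<noteq> 0 \<longrightarrow> sok n d a" "\<forall>a. g a \<noteq> 0 \<longrightarrow> sok n e a" "ls_mult f g c \<noteq> 0"
  shows "sok n (d+e) c"
proof -
  from assms(3) obtain a where "f a \<noteq> 0" "g (\<lambda>i. c i - a i) \<noteq> 0"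
    unfolding ls_mult_def by (metis (mono_tags, lifting) mem_Collect_eq sum.not_neutral_contains_not_neutral)
  then have "sok n (d+e) (\<lambda>i. a i + (c i - a i))" using assms by (intro sok_add) auto
  then show ?thesis by simp
qed

lemma good_mult: "good f \<Longrightarrow> good g \<Longrightarrow> good (ls_mult f (g::'a::comm_ring_1 lser))"
proof -
  assume "good f" "good g"
  then obtain n d where d: "d \<le> 0" "\<forall>a. f a \<noteq> 0 \<longrightarrow> sok n d a" "\<forall>a. g a \<noteq> 0 \<longrightarrow> sok n d a"
    using good_common by blast
  show ?thesis unfolding good_def
    by (rule exI[of _ n], rule exI[of _ "d+d"]) (use d mult_supp[OF d(2,3)] in auto)
qed

lemma good_add: "good f \<Longrightarrow> good g \<Longrightarrow> good (ls_add f (g::'a::comm_ring_1 lser))"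
  unfolding ls_add_def by (drule (1) good_common) (auto simp: good_def, metis add.right_neutral)

lemma good_sub: "good f \<Longrightarrow> good g \<Longrightarrow> good (ls_sub f (g::'a::comm_ring_1 lser))"
  unfolding ls_sub_def by (drule (1) good_common) (auto simp: good_def, metis diff_self diff_zero)

lemma good_uminus: "good f \<Longrightarrow> good (ls_uminus (f::'a::comm_ring_1 lser))"
  unfolding ls_uminus_def good_def by auto

lemma good_const: "good (ls_const c)"
  unfolding ls_const_def good_def sok_def by (rule exI[of _ 0]) auto

lemma good_zero: "good ls_zero"
  unfolding ls_zero_def good_def by auto

lemma laurent_good: "laurent n f \<Longrightarrow> good f"
  unfolding laurent_def good_def sok_def
  by (metis (no_types, lifting) min.cobounded1 min.cobounded2 not_le order_less_le_trans)




lemma bij_shift: "bij (\<lambda>e::nat\<Rightarrow>int. \<lambda>i. b i + e i)"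
  by (rule bijI) (auto simp: inj_def fun_eq_iff surj_def intro!: exI[of _ "\<lambda>i. _ i - b i"])

lemma bij_refl: "bij (\<lambda>a::nat\<Rightarrow>int. \<lambda>i. c i - a i)"
  by (rule bijI) (auto simp: inj_def fun_eq_iff surj_def intro!: exI[of _ "\<lambda>i. c i - _ i"])

lemma mult_comm:
  fixes f g :: "'a::comm_ring_1 lser"
  assumes "good f" "good g"
  shows "ls_mult f g = ls_mult g f"
proof
  fix c
  obtain n d where d: "d \<le> 0" "\<forall>a. f a \<noteq> 0 \<longrightarrow> sok n d a" "\<forall>a. g a \<noteq> 0 \<longrightarrow> sok n d a"
    using good_common[OF assms] by blast
  have "ls_mult g f c = Sum_any (\<lambda>a. g a * f (\<lambda>i. c i - a i))" by (rule mult_conv'[OF d(3,2)])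
  also have "\<dots> = Sum_any (\<lambda>a. f a * g (\<lambda>i. c i - a i))"
    by (rule Sum_any.reindex_cong[OF bij_refl[of c]]) (simp add: fun_eq_iff mult.commute)
  also have "\<dots> = ls_mult f g c" by (rule mult_conv'[OF d(2,3), symmetric])
  finally show "ls_mult f g c = ls_mult g f c" by simp
qed

lemma mult_distrib:
  fixes f g h :: "'a::comm_ring_1 lser"
  assumes "good f" "good g" "good h"
  shows "ls_mult (ls_add f g) h = ls_add (ls_mult f h) (ls_mult g h)"
proof
  fix c
  obtain n d where d: "d \<le> 0" "\<forall>a. f a \<noteq> 0 \<longrightarrow> sok n d a" "\<forall>a. g a \<noteq> 0 \<longrightarrow> sok n d a"
     "\<forall>a. h a \<noteq> 0 \<longrightarrow> sok n d a"
    using good_common3[OF assms] by blast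
  have fg: "\<forall>a. ls_add f g a \<noteq> 0 \<longrightarrow> sok n d a" using d unfolding ls_add_def by force
  show "ls_mult (ls_add f g) h c = ls_add (ls_mult f h) (ls_mult g h) c"
    unfolding ls_add_def[of "ls_mult f h"]
    apply (simp only: mult_conv'[OF fg d(4)] mult_conv'[OF d(2) d(4)] mult_conv'[OF d(3) d(4)])
    apply (subst Sum_any.distrib[symmetric])
      apply (rule supp_finite2[OF d(2,4)])
     apply (rule supp_finite2[OF d(3,4)])
    apply (simp add: ls_add_def algebra_simps)
    done
qed

lemma mono_mult:
  fixes f :: "'a::comm_ring_1 lser"
  shows "ls_mult (\<lambda>a. if a = e then 1 else 0) f = (\<lambda>c. f (\<lambda>i. c i - e i))"
proof
  fix c
  have "{a. (if a = e then 1 else (0::'a)) \<noteq> 0 \<and> f (\<lambda>i. c i - a i) \<noteq> 0} = (if f (\<lambda>i. c i - e i) \<noteq> 0 then {e} else {})"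
    by auto
  then show "ls_mult (\<lambda>a. if a = e then 1 else 0) f c = f (\<lambda>i. c i - e i)"
    unfolding ls_mult_def by auto
qed

lemma mult_assoc:
  fixes f g h :: "'a::comm_ring_1 lser"
  assumes "good f" "good g" "good h"
  shows "ls_mult (ls_mult f g) h = ls_mult f (ls_mult g h)"
proof
  fix c
  obtain n d where d: "d \<le> 0" "\<forall>a. f a \<noteq> 0 \<longrightarrow> sok n d a" "\<forall>a. g a \<noteq> 0 \<longrightarrow> sok n d a"
     "\<forall>a. h a \<noteq> 0 \<longrightarrow> sok n d a"
    using good_common3[OF assms] by blast
  have d2: "\<forall>a. f a \<noteq> 0 \<longrightarrow> sok n (d+d) a" "\<forall>a. h a \<noteq> 0 \<longrightarrow> sok n (d+d) a"
    using d by (auto intro: sok_mono)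
  have fg: "\<forall>a. ls_mult f g a \<noteq> 0 \<longrightarrow> sok n (d+d) a" using mult_supp[OF d(2,3)] by blast
  have gh: "\<forall>a. ls_mult g h a \<noteq> 0 \<longrightarrow> sok n (d+d) a" using mult_supp[OF d(3,4)] by blast
  let ?phi = "\<lambda>a b. f b * g (\<lambda>i. a i - b i) * h (\<lambda>i. c i - a i)"
  have "ls_mult (ls_mult f g) h c = Sum_any (\<lambda>a. ls_mult f g a * h (\<lambda>i. c i - a i))"
    by (rule mult_conv'[OF fg d2(2)])
  also have "\<dots> = Sum_any (\<lambda>a. Sum_any (\<lambda>b. f b * g (\<lambda>i. a i - b i)) * h (\<lambda>i. c i - a i))"
    by (simp only: mult_conv'[OF d(2,3)])
  also have "\<dots> = Sum_any (\<lambda>a. Sum_any (\<lambda>b. ?phi a b))"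
    by (subst Sum_any_left_distrib[OF supp_finite2[OF d(2,3)]]) simp
  also have "\<dots> = Sum_any (\<lambda>b. Sum_any (\<lambda>a. ?phi a b))"
  proof (rule Sum_any.swap)
    let ?K = "{a. sok n (d+d) a \<and> sok n (d+d) (\<lambda>i. c i - a i)}"
    show "finite (?K \<times> ?K)" using box_finite by blast
    show "{a. \<exists>b. ?phi a b \<noteq> 0} \<times> {b. \<exists>a. ?phi a b \<noteq> 0} \<subseteq> ?K \<times> ?K"
    proof
      fix p assume "p \<in> {a. \<exists>b. ?phi a b \<noteq> 0} \<times> {b. \<exists>a. ?phi a b \<noteq> 0}"
      then obtain a b a' b' where p: "p = (a, b)" and 1: "?phi a b' \<noteq> 0" and 2: "?phi a' b \<noteq> 0"
        by blast
      from 1 have "f b' \<noteq> 0" "g (\<lambda>i. a i - b' i) \<noteq> 0" "h (\<lambda>i. c i - a i) \<noteq> 0" by auto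
      then have s1: "sok n d b'" and s2: "sok n d (\<lambda>i. a i - b' i)" and s3: "sok n d (\<lambda>i. c i - a i)"
        using d by auto
      have t1: "sok n (d+d) (\<lambda>i. b' i + (a i - b' i))" by (rule sok_add[OF s1 s2])
      have t2: "sok n (d+d) (\<lambda>i. c i - a i)" by (rule sok_mono[OF s3]) (use d(1) in auto)
      from t1 t2 have A: "a \<in> ?K" by simp
      from 2 have "f b \<noteq> 0" "g (\<lambda>i. a' i - b i) \<noteq> 0" "h (\<lambda>i. c i - a' i) \<noteq> 0" by auto
      then have s1: "sok n d b" and s2: "sok n d (\<lambda>i. a' i - b i)" and s3: "sok n d (\<lambda>i. c i - a' i)"
        using d by auto
      have t1: "sok n (d+d) (\<lambda>i. (a' i - b i) + (c i - a' i))" by (rule sok_add[OF s2 s3])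
      have t2: "sok n (d+d) b" by (rule sok_mono[OF s1]) (use d(1) in auto)
      from t1 t2 have B: "b \<in> ?K" by simp
      show "p \<in> ?K \<times> ?K" using A B p by simp
    qed
  qed
  also have "\<dots> = Sum_any (\<lambda>b. Sum_any (\<lambda>e. f b * (g e * h (\<lambda>i. (c i - b i) - e i))))"
  proof (rule Sum_any.cong)
    fix b
    show "Sum_any (\<lambda>a. ?phi a b) = Sum_any (\<lambda>e. f b * (g e * h (\<lambda>i. (c i - b i) - e i)))"
      by (rule Sum_any.reindex_cong[OF bij_shift[of b]]) (simp add: fun_eq_iff algebra_simps)
  qed
  also have "\<dots> = Sum_any (\<lambda>b. f b * ls_mult g h (\<lambda>i. c i - b i))"
    by (simp only: mult_conv'[OF d(3,4)] Sum_any_right_distrib[OF supp_finite2[OF d(3,4)]])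
  also have "\<dots> = ls_mult f (ls_mult g h) c"
    by (rule mult_conv'[OF d2(1) gh, symmetric])
  finally show "ls_mult (ls_mult f g) h c = ls_mult f (ls_mult g h) c" .
qed




typedef (overloaded) ('a::comm_ring_1) lsr = "{f :: 'a lser. good f}"
  by (rule exI[of _ ls_zero]) (simp add: good_zero)

setup_lifting type_definition_lsr

instantiation lsr :: (comm_ring_1) comm_ring_1
begin
lift_definition zero_lsr :: "'a lsr" is ls_zero by (rule good_zero)
lift_definition one_lsr :: "'a lsr" is ls_one unfolding ls_one_def by (rule good_const)
lift_definition plus_lsr :: "'a lsr \<Rightarrow> 'a lsr \<Rightarrow> 'a lsr" is ls_add by (rule good_add)
lift_definition minus_lsr :: "'a lsr \<Rightarrow> 'a lsr \<Rightarrow> 'a lsr" is ls_sub by (rule good_sub)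
lift_definition uminus_lsr :: "'a lsr \<Rightarrow> 'a lsr" is ls_uminus by (rule good_uminus)
lift_definition times_lsr :: "'a lsr \<Rightarrow> 'a lsr \<Rightarrow> 'a lsr" is ls_mult by (rule good_mult)
instance
proof
  fix a b c :: "'a lsr"
  show "a * b * c = a * (b * c)" by transfer (rule mult_assoc)
  show "a * b = b * a" by transfer (rule mult_comm)
  show "1 * a = a"
    by transfer (simp add: ls_one_def ls_const_def mono_mult[of "\<lambda>_. 0", unfolded ls_const_def])
  show "a + b + c = a + (b + c)" by transfer (simp add: ls_add_def add.assoc)
  show "a + b = b + a" by transfer (simp add: ls_add_def add.commute)
  show "0 + a = a" by transfer (simp add: ls_add_def ls_zero_def)
  show "- a + a = 0" by transfer (simp add: ls_add_def ls_zero_def ls_uminus_def)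
  show "a - b = a + - b" by transfer (simp add: ls_add_def ls_sub_def ls_uminus_def)
  show "(a + b) * c = a * c + b * c" by transfer (rule mult_distrib)
  show "(0::'a lsr) \<noteq> 1"
  proof
    assume "(0::'a lsr) = 1"
    then have "Rep_lsr (0::'a lsr) (\<lambda>_. 0) = Rep_lsr (1::'a lsr) (\<lambda>_. 0)" by simp
    then show False by (simp add: zero_lsr.rep_eq one_lsr.rep_eq ls_zero_def ls_one_def ls_const_def)
  qed
qed
end




definition mon :: "(nat \<Rightarrow> int) \<Rightarrow> 'a::comm_ring_1 lser" where
  "mon e = (\<lambda>a. if a = e then 1 else 0)"
definition ev :: "nat \<Rightarrow> nat \<Rightarrow> nat \<Rightarrow> int" where
  "ev n j = (\<lambda>k. if j \<le> k \<and> k \<le> n then 1 else 0)"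
definition dd :: "nat \<Rightarrow> nat \<Rightarrow> nat \<Rightarrow> int" where
  "dd i j = (\<lambda>k. if i \<le> k \<and> k < j then 1 else 0)"
definition geo :: "(nat \<Rightarrow> int) \<Rightarrow> 'a::comm_ring_1 lser" where
  "geo d = (\<lambda>a. if \<exists>t::nat. a = (\<lambda>k. int t * d k) then 1 else 0)"

lemma q_mon: "ls_q n j = mon (ev n j)"
  unfolding ls_q_def mon_def ev_def by simp

lemma one_mon: "(ls_one :: 'a::comm_ring_1 lser) = mon (\<lambda>_. 0)"
  unfolding ls_one_def ls_const_def mon_def by simp

lemma laurent_mon:
  assumes "\<forall>k. k \<notin> {1..n} \<longrightarrow> e k = 0" "\<forall>k. -1 \<le> e k"
  shows "laurent n (mon e :: 'a::comm_ring_1 lser)"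
  unfolding laurent_def mon_def using assms
  by (auto intro!: exI[of _ "-1"]) (metis not_less)

lemma good_mon:
  assumes "\<forall>k. k \<notin> {1..n} \<longrightarrow> e k = 0" "\<forall>k. -1 \<le> e k"
  shows "good (mon e :: 'a::comm_ring_1 lser)"
  by (rule laurent_good[OF laurent_mon[OF assms]])

lemma inv_unique:
  fixes f g :: "'a::comm_ring_1 lser"
  assumes "good f" "laurent n g" "ls_mult f g = ls_one"
  shows "ls_inv n f = g"
  unfolding ls_inv_def
proof (rule the_equality)
  show "laurent n g \<and> ls_mult f g = ls_one" using assms by simp
  fix g' assume g': "laurent n g' \<and> ls_mult f g' = ls_one"
  have gg: "good g" "good g'" using assms(2) g' laurent_good by blast+
  have 1: "Abs_lsr f * Abs_lsr g = 1"
    by (rule Rep_lsr_inject[THEN iffD1])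
       (simp add: times_lsr.rep_eq one_lsr.rep_eq Abs_lsr_inverse assms gg)
  have 2: "Abs_lsr f * Abs_lsr g' = 1"
    by (rule Rep_lsr_inject[THEN iffD1])
       (simp add: times_lsr.rep_eq one_lsr.rep_eq Abs_lsr_inverse assms gg g')
  have "Abs_lsr g' = Abs_lsr g' * (Abs_lsr f * Abs_lsr g)" using 1 by simp
  also have "\<dots> = (Abs_lsr f * Abs_lsr g') * Abs_lsr g" by (simp add: algebra_simps)
  also have "\<dots> = Abs_lsr g" using 2 by simp
  finally show "g' = g" by (simp add: Abs_lsr_inject gg)
qed

lemma ev_out: "1 \<le> j \<Longrightarrow> \<forall>k. k \<notin> {1..n} \<longrightarrow> ev n j k = 0"
  unfolding ev_def by auto
lemma ev_ge: "\<forall>k. -1 \<le> ev n j k"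
  unfolding ev_def by auto

lemma mon_mon: "ls_mult (mon e) (mon e' :: 'a::comm_ring_1 lser) = mon (\<lambda>k. e k + e' k)"
  unfolding mon_def[of e] mono_mult
  by (auto simp: mon_def fun_eq_iff) (metis add.commute diff_add_cancel)+

lemma inv_q:
  assumes "1 \<le> j"
  shows "ls_inv n (ls_q n j) = (mon (\<lambda>k. - ev n j k) :: 'a::comm_ring_1 lser)"
proof (rule inv_unique)
  show "good (ls_q n j :: 'a lser)" unfolding q_mon by (rule good_mon) (use ev_out[OF assms] ev_ge in auto)
  show "laurent n (mon (\<lambda>k. - ev n j k) :: 'a lser)"
    by (rule laurent_mon) (use ev_out[OF assms] ev_ge in \<open>auto simp: ev_def\<close>)
  show "ls_mult (ls_q n j) (mon (\<lambda>k. - ev n j k)) = (ls_one :: 'a lser)"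
    unfolding q_mon mon_mon one_mon by simp
qed

lemma q_p:
  assumes "i < j" "j \<le> n"
  shows "ls_mult (ls_q n i) (mon (\<lambda>k. - ev n j k)) = (mon (dd i j) :: 'a::comm_ring_1 lser)"
proof -
  have "(\<lambda>k. ev n i k + - ev n j k) = dd i j" using assms unfolding ev_def dd_def by (auto simp: fun_eq_iff)
  then show ?thesis unfolding q_mon mon_mon by simp
qed

lemma geo_laurent:
  assumes "1 \<le> i" "j \<le> n"
  shows "laurent n (geo (dd i j) :: 'a::comm_ring_1 lser)"
  unfolding laurent_def geo_def using assms
  by (auto simp: dd_def split: if_splits intro!: exI[of _ 0])

lemma geo_step:
  assumes "i < j"
  shows "(geo (dd i j) c :: 'a::comm_ring_1) - geo (dd i j) (\<lambda>k. c k - dd i j k) = ls_one c"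
proof -
  let ?d = "dd i j"
  have di: "?d i = 1" using assms by (simp add: dd_def)
  show ?thesis
  proof (cases "\<exists>t::nat. c = (\<lambda>k. int t * ?d k)")
    case True
    then obtain t::nat where t: "c = (\<lambda>k. int t * ?d k)" by blast
    show ?thesis
    proof (cases t)
      case 0
      then have c0: "c = (\<lambda>_. 0)" using t by auto
      have "\<not> (\<exists>s::nat. (\<lambda>k. c k - ?d k) = (\<lambda>k. int s * ?d k))"
      proof
        assume "\<exists>s::nat. (\<lambda>k. c k - ?d k) = (\<lambda>k. int s * ?d k)"
        then obtain s::nat where "(\<lambda>k. c k - ?d k) = (\<lambda>k. int s * ?d k)" by blast
        then have "c i - ?d i = int s * ?d i" by meson
        then show False using c0 di by simp
      qed
      then show ?thesis using c0 unfolding geo_def ls_one_def ls_const_def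
        by (auto intro: exI[of _ 0])
    next
      case (Suc s)
      have "(\<lambda>k. c k - ?d k) = (\<lambda>k. int s * ?d k)" using t Suc by (auto simp: fun_eq_iff algebra_simps)
      moreover have "c \<noteq> (\<lambda>_. 0)"
      proof
        assume "c = (\<lambda>_. 0)" then have "c i = 0" by simp
        then show False using t Suc di by simp
      qed
      ultimately show ?thesis using t unfolding geo_def ls_one_def ls_const_def by auto
    qed
  next
    case False
    have "\<not> (\<exists>s::nat. (\<lambda>k. c k - ?d k) = (\<lambda>k. int s * ?d k))"
    proof
      assume "\<exists>s::nat. (\<lambda>k. c k - ?d k) = (\<lambda>k. int s * ?d k)"
      then obtain s::nat where "(\<lambda>k. c k - ?d k) = (\<lambda>k. int s * ?d k)" by blast
      then have "c = (\<lambda>k. int (Suc s) * ?d k)" by (auto simp: fun_eq_iff algebra_simps)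
      then show False using False by blast
    qed
    moreover have "c \<noteq> (\<lambda>_. 0)" using False by (metis mult_zero_left of_nat_0)
    ultimately show ?thesis using False unfolding geo_def ls_one_def ls_const_def by auto
  qed
qed




lemma good_one: "good (ls_one :: 'a::comm_ring_1 lser)"
  unfolding ls_one_def by (rule good_const)

lemma good_dd: "1 \<le> i \<Longrightarrow> j \<le> n \<Longrightarrow> good (mon (dd i j) :: 'a::comm_ring_1 lser)"
  by (rule good_mon[of n]) (auto simp: dd_def)

lemma rep_abs: "good f \<Longrightarrow> Rep_lsr (Abs_lsr f) = f"
  by (simp add: Abs_lsr_inverse)

lemma geo_inv:
  assumes "1 \<le> i" "i < j" "j \<le> n"
  shows "ls_mult (ls_sub ls_one (mon (dd i j))) (geo (dd i j)) = (ls_one :: 'a::comm_ring_1 lser)"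
proof -
  have gm: "good (mon (dd i j) :: 'a lser)" by (rule good_dd) (use assms in auto)
  have gg: "good (geo (dd i j) :: 'a lser)" by (rule laurent_good[OF geo_laurent]) (use assms in auto)
  let ?M = "Abs_lsr (mon (dd i j)) :: 'a lsr" and ?G = "Abs_lsr (geo (dd i j)) :: 'a lsr"
  have "ls_mult (ls_sub ls_one (mon (dd i j))) (geo (dd i j)) = Rep_lsr ((1 - ?M) * ?G)"
    by (simp add: times_lsr.rep_eq minus_lsr.rep_eq one_lsr.rep_eq rep_abs gm gg)
  also have "(1 - ?M) * ?G = ?G - ?M * ?G" by (simp add: algebra_simps)
  also have "Rep_lsr (?G - ?M * ?G) = ls_sub (geo (dd i j)) (ls_mult (mon (dd i j)) (geo (dd i j)))"
    by (simp add: times_lsr.rep_eq minus_lsr.rep_eq rep_abs gm gg)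
  also have "\<dots> = ls_one"
    unfolding ls_sub_def mon_def mono_mult
  proof (rule ext)
    fix c
    show "geo (dd i j) c - geo (dd i j) (\<lambda>k. c k - dd i j k) = (ls_one :: 'a lser) c"
      by (rule geo_step[OF assms(2)])
  qed
  finally show ?thesis .
qed

lemma inv_u:
  assumes "1 \<le> i" "i < j" "j \<le> n"
  shows "ls_inv n (ls_sub ls_one (ls_mult (ls_q n i) (ls_inv n (ls_q n j)))) = (geo (dd i j) :: 'a::comm_ring_1 lser)"
proof -
  have "ls_inv n (ls_q n j) = (mon (\<lambda>k. - ev n j k) :: 'a lser)" by (rule inv_q) (use assms in auto)
  then have e: "ls_mult (ls_q n i) (ls_inv n (ls_q n j)) = (mon (dd i j) :: 'a lser)"
    using q_p[OF assms(2,3)] by simp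
  show ?thesis unfolding e
  proof (rule inv_unique)
    show "good (ls_sub ls_one (mon (dd i j)) :: 'a lser)"
      by (rule good_sub[OF good_one good_dd]) (use assms in auto)
    show "laurent n (geo (dd i j) :: 'a lser)" by (rule geo_laurent) (use assms in auto)
    show "ls_mult (ls_sub ls_one (mon (dd i j))) (geo (dd i j)) = (ls_one :: 'a lser)"
      by (rule geo_inv[OF assms])
  qed
qed

lemma Ax:
  assumes "1 \<le> i" "i < j" "j \<le> n"
  shows "A_x n \<beta> \<alpha> i j = ls_uminus (ls_mult (ls_add (ls_add (ls_q n i) (ls_const \<beta>))
           (ls_mult (ls_const \<alpha>) (mon (\<lambda>k. - ev n j k)))) (geo (dd i j)))"
proof -
  have "ls_inv n (ls_q n j) = (mon (\<lambda>k. - ev n j k) :: 'a lser)" by (rule inv_q) (use assms in auto)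
  then show ?thesis unfolding A_x_def inv_u[OF assms] by simp
qed

lemma alg:
  fixes qi qj qk pj pk gij gjk gik b a :: "'a::comm_ring_1"
  assumes "qj*pj = 1" "(1 - qi*pj)*gij = 1" "(1-qj*pk)*gjk = 1" "(1 - qi*pk)*gik=1"
  shows "(-((qi + b + a*pj)*gij))*(-((qj + b + a*pk)*gjk)) - (-((qi + b + a*pk)*gik))*((-((qi + b + a*pj)*gij))+(-((qj + b + a*pk)*gjk))+b) - a = 0"
proof -
  define u1 where "u1 = 1 - qi*pj" define u2 where "u2 = 1-qj*pk" define u3 where "u3 = 1 - qi*pk"
  define n1 where "n1 = qi + b + a*pj" define n2 where "n2 = qj + b + a*pk" define n3 where "n3 = qi + b + a*pk"
  define x1 where "x1 = -(n1*gij)" define x2 where "x2 = -(n2*gjk)" define x3 where "x3 = -(n3*gik)"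
  have h1: "x1*u1 = -n1" using assms(2) unfolding x1_def u1_def by (metis minus_mult_left mult.assoc mult.commute mult_1_right)
  have h2: "x2*u2 = -n2" using assms(3) unfolding x2_def u2_def by (metis minus_mult_left mult.assoc mult.commute mult_1_right)
  have h3: "x3*u3 = -n3" using assms(4) unfolding x3_def u3_def by (metis minus_mult_left mult.assoc mult.commute mult_1_right)
  have F: "n1*n2*u3 - n3*(n1*u2+n2*u1 - b*u1*u2) - a*u1*u2*u3 = 0"
  proof -
    have "n1*n2*u3 - n3*(n1*u2+n2*u1 - b*u1*u2) - a*u1*u2*u3 = (qj*pj - 1)*(a + qi*qi + qi*qi*pk*b + pk*b*a + qi*b + qi*pk*b*b + pk*pk*a*a + qi*pk*pk*b*a + qi*qi*pk*pk*a)"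
      unfolding u1_def u2_def u3_def n1_def n2_def n3_def by (simp add: algebra_simps)
    then show ?thesis using assms(1) by simp
  qed
  have "(x1*x2 - x3*(x1+x2+b) - a)*u1*u2*u3 = (x1*u1)*(x2*u2)*u3 - (x3*u3)*((x1*u1)*u2 + (x2*u2)*u1 + b*u1*u2) - a*u1*u2*u3"
    by (simp add: algebra_simps)
  also have "\<dots> = (-n1)*(-n2)*u3 - (-n3)*((-n1)*u2 + (-n2)*u1 + b*u1*u2) - a*u1*u2*u3"
    by (simp only: h1 h2 h3)
  also have "\<dots> = 0" using F by (simp add: algebra_simps)
  finally have E: "(x1*x2 - x3*(x1+x2+b) - a)*u1*u2*u3 = 0" .
  have "x1*x2 - x3*(x1+x2+b) - a = (x1*x2 - x3*(x1+x2+b) - a)*(u1*gij)*(u2*gjk)*(u3*gik)"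
    using assms unfolding u1_def u2_def u3_def by simp
  also have "\<dots> = ((x1*x2 - x3*(x1+x2+b) - a)*u1*u2*u3)*gij*gjk*gik" by (simp add: algebra_simps)
  also have "\<dots> = 0" using E by simp
  finally show ?thesis unfolding x1_def x2_def x3_def n1_def n2_def n3_def .
qed

theorem proposition3p5:
  fixes \<beta> \<alpha> :: "'a::comm_ring_1" and n i j k :: nat
  assumes "1 \<le> i" and "i < j" and "j < k" and "k \<le> n"
  shows "ls_sub
           (ls_sub (ls_mult (A_x n \<beta> \<alpha> i j) (A_x n \<beta> \<alpha> j k))
                   (ls_mult (A_x n \<beta> \<alpha> i k)
                      (ls_add (ls_add (A_x n \<beta> \<alpha> i j) (A_x n \<beta> \<alpha> j k)) (ls_const \<beta>))))
           (ls_const \<alpha>) = ls_zero"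
proof -
  have gq: "\<And>m. 1 \<le> m \<Longrightarrow> good (ls_q n m :: 'a lser)"
    unfolding q_mon by (rule good_mon) (auto simp: ev_def)
  have gp: "\<And>m. 1 \<le> m \<Longrightarrow> good (mon (\<lambda>k. - ev n m k) :: 'a lser)"
    by (rule good_mon) (auto simp: ev_def)
  have gg: "\<And>a b. 1 \<le> a \<Longrightarrow> b \<le> n \<Longrightarrow> good (geo (dd a b) :: 'a lser)"
    by (rule laurent_good[OF geo_laurent]) auto
  have i1: "1 \<le> i" and j1: "1 \<le> j" and k1: "1 \<le> k" and jn: "j \<le> n" and kn: "k \<le> n"
    using assms by auto
  have gc: "\<And>c. good (ls_const c :: 'a lser)" by (rule good_const)
  let ?Q = "\<lambda>m. Abs_lsr (ls_q n m) :: 'a lsr"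
  let ?P = "\<lambda>m. Abs_lsr (mon (\<lambda>k. - ev n m k)) :: 'a lsr"
  let ?G = "\<lambda>a b. Abs_lsr (geo (dd a b)) :: 'a lsr"
  let ?C = "\<lambda>c. Abs_lsr (ls_const c) :: 'a lsr"
  have qp: "\<And>m. 1 \<le> m \<Longrightarrow> ?Q m * ?P m = 1"
  proof -
    fix m :: nat assume m: "1 \<le> m"
    show "?Q m * ?P m = 1"
      by (rule Rep_lsr_inject[THEN iffD1])
         (simp add: times_lsr.rep_eq one_lsr.rep_eq rep_abs[OF gq[OF m]] rep_abs[OF gp[OF m]], simp add: q_mon mon_mon one_mon)
  qed
  have ug: "\<And>a b. 1 \<le> a \<Longrightarrow> a < b \<Longrightarrow> b \<le> n \<Longrightarrow> (1 - ?Q a * ?P b) * ?G a b = 1"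
  proof -
    fix a b :: nat assume ab: "1 \<le> a" "a < b" "b \<le> n"
    show "(1 - ?Q a * ?P b) * ?G a b = 1"
      by (rule Rep_lsr_inject[THEN iffD1])
         (simp add: times_lsr.rep_eq one_lsr.rep_eq minus_lsr.rep_eq rep_abs[OF gq[OF ab(1)]]
            rep_abs[OF gp[OF order_trans[OF ab(1) less_imp_le[OF ab(2)]]]] rep_abs[OF gg[OF ab(1) ab(3)]] q_p[OF ab(2,3)] geo_inv[OF ab])
  qed
  have E: "(-((?Q i + ?C \<beta> + ?C \<alpha> * ?P j) * ?G i j)) * (-((?Q j + ?C \<beta> + ?C \<alpha> * ?P k) * ?G j k))
     - (-((?Q i + ?C \<beta> + ?C \<alpha> * ?P k) * ?G i k)) * ((-((?Q i + ?C \<beta> + ?C \<alpha> * ?P j) * ?G i j))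
        + (-((?Q j + ?C \<beta> + ?C \<alpha> * ?P k) * ?G j k)) + ?C \<beta>) - ?C \<alpha> = 0"
    by (rule alg[OF qp ug ug ug]) (use assms in auto)
  then have "Rep_lsr ((-((?Q i + ?C \<beta> + ?C \<alpha> * ?P j) * ?G i j)) * (-((?Q j + ?C \<beta> + ?C \<alpha> * ?P k) * ?G j k))
     - (-((?Q i + ?C \<beta> + ?C \<alpha> * ?P k) * ?G i k)) * ((-((?Q i + ?C \<beta> + ?C \<alpha> * ?P j) * ?G i j))
        + (-((?Q j + ?C \<beta> + ?C \<alpha> * ?P k) * ?G j k)) + ?C \<beta>) - ?C \<alpha>) = Rep_lsr 0" by (rule arg_cong)
  then have R: "ls_sub
           (ls_sub (ls_mult (ls_uminus (ls_mult (ls_add (ls_add (ls_q n i) (ls_const \<beta>))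
           (ls_mult (ls_const \<alpha>) (mon (\<lambda>k. - ev n j k)))) (geo (dd i j))))
              (ls_uminus (ls_mult (ls_add (ls_add (ls_q n j) (ls_const \<beta>))
           (ls_mult (ls_const \<alpha>) (mon (\<lambda>ka. - ev n k ka)))) (geo (dd j k)))))
                   (ls_mult (ls_uminus (ls_mult (ls_add (ls_add (ls_q n i) (ls_const \<beta>))
           (ls_mult (ls_const \<alpha>) (mon (\<lambda>ka. - ev n k ka)))) (geo (dd i k))))
                      (ls_add (ls_add (ls_uminus (ls_mult (ls_add (ls_add (ls_q n i) (ls_const \<beta>))
           (ls_mult (ls_const \<alpha>) (mon (\<lambda>k. - ev n j k)))) (geo (dd i j))))
                (ls_uminus (ls_mult (ls_add (ls_add (ls_q n j) (ls_const \<beta>))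
           (ls_mult (ls_const \<alpha>) (mon (\<lambda>ka. - ev n k ka)))) (geo (dd j k))))) (ls_const \<beta>))))
           (ls_const \<alpha>) = ls_zero"
    by (simp only: times_lsr.rep_eq minus_lsr.rep_eq plus_lsr.rep_eq uminus_lsr.rep_eq
        zero_lsr.rep_eq rep_abs[OF gc] rep_abs[OF gq[OF i1]] rep_abs[OF gq[OF j1]]
        rep_abs[OF gp[OF j1]] rep_abs[OF gp[OF k1]]
        rep_abs[OF gg[OF i1 jn]] rep_abs[OF gg[OF j1 kn]] rep_abs[OF gg[OF i1 kn]])
  have ij: "1 \<le> i" "i < j" "j \<le> n" and jk: "1 \<le> j" "j < k" "k \<le> n" and ik: "1 \<le> i" "i < k" "k \<le> n"
    using assms by auto
  show ?thesis unfolding Ax[OF ij] Ax[OF jk] Ax[OF ik] by (rule R)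
qed


end
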